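(* Assume $c_i=c>0$, $\gamma_i=\gamma>0$, $\nu_i=\nu>0$, $\rho_i=\rho\in(-1,1)$ for all $i$. Let $f^0$ denote $f$ with $\gamma_{\rm P}$ replaced by $0$. Then $f^0$ has a unique maximiser, it is symmetric with common values $z^0_{s,n}$ (all $z^{S,i}$), $z^0_{d,n}$ (all diagonal $z^{Q,i,i}$), $z^0_{o,n}$ (all off-diagonal $z^{Q,i,j}$, $n\ge2$), these are the limits as $\gamma_{\rm P}\downarrow0$ of the corresponding values of the maximiser of $f$, and $$z^0_{s,n}=-\frac{\sqrt n}{\sigma}\frac{\rho}{Ac\nu}\frac{1}{n-\eta_n},\quad z^0_{o,n}=\frac{\rho^2}{Ac\nu^2}\frac{1}{n-\eta_n}\ (n\ge2),\quad z^0_{d,n}=\frac{1}{Ac\nu^2}\Big(1+\frac{\gamma\rho^2/A}{n-\eta_n}\Big),$$ where $A=\gamma+\frac{1}{c\nu^2}$ and $\eta_n=\rho^2\big((n-1)+\frac{\gamma}{A}\big)\in[0,n)$. Moreover, with all other parameters held fixed and $\nu^\dagger_{n,\rho}=\sqrt{\frac{n(1-\rho^2)+\rho^2}{\gamma cn(1-\rho^2)}}$: $|z^0_{s,n}|$ is increasing in $|\rho|$ and decreasing in $c$; $|z^0_{s,n}|$ is increasing in $\nu$ on $(0,\nu^\dagger_{n,\rho}]$ and decreasing on $[\nu^\dagger_{n,\rho},\infty)$; $z^0_{o,n}$ (for $n\ge2$) increases with $|\rho|$ and decreases with $c$ and with $\nu$; $z^0_{d,n}$ increases with $|\rho|$ and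 decreases with $c$ and with $\nu$.
   Context: Fix an integer $n\ge1$ and parameters $\sigma>0$, $\gamma_{\rm P}>0$, and for each $i\in\{1,\dots,n\}$: $c_i>0$, $\gamma_i>0$, $\nu_i>0$, $\rho_i\in(-1,1)$. Write $\nu=(\nu_1,\dots,\nu_n)^\top$, $\rho=(\rho_1,\dots,\rho_n)^\top$. The variables are a matrix $z^Q=(z^{Q,i,j})_{i,j}\in\mathbb{R}^{n\times n}$ ($i$ row, $j$ column) and a vector $z^S=(z^{S,1},\dots,z^{S,n})^\top\in\mathbb{R}^n$. Define $f:\mathbb{R}^{n\times n}\times\mathbb{R}^n\to\mathbb{R}$ by $$f(z^Q,z^S)=-\frac1n\sum_{i=1}^n\Big(\frac{(z^{Q,i,i})^2}{2c_i}+\frac{\gamma_i}{2}\sum_{j=1}^n\nu_j^2(z^{Q,i,j})^2+\frac{\gamma_i\sigma^2}{2}(z^{S,i})^2+\frac{\gamma_i\sigma}{\sqrt n}z^{S,i}\sum_{j=1}^n\rho_j\nu_jz^{Q,i,j}-\frac{z^{Q,i,i}}{c_i}\Big)-\frac{\gamma_{\rm P}}{2n^2}\sum_{i=1}^n\Big(\Big(\nu_i-\nu_i\sum_{j=1}^nz^{Q,j,i}-\frac{\rho_i\sigma}{\sqrt n}\sum_{j=1}^nz^{S,j}\Big)^2+\frac{(1-\rho_i^2)\sigma^2}{n}\Big(\sum_{j=1}^nz^{S,j}\Big)^2\Big).$$ $f$ has a unique global maximiser $(z^{Q,\star},z^{S,\star})$. *)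

theory Defs
  imports "HOL-Analysis.Analysis"
begin

text \<open>Indices range over the finite type 'n, so n = CARD('n).
  zQ $ i $ j is z^{Q,i,j} (row i, column j), zS $ i is z^{S,i}.\<close>

definition fobj :: "real \<Rightarrow> real \<Rightarrow> ('n::finite \<Rightarrow> real) \<Rightarrow> ('n \<Rightarrow> real) \<Rightarrow> ('n \<Rightarrow> real)
    \<Rightarrow> ('n \<Rightarrow> real) \<Rightarrow> real^'n^'n \<Rightarrow> real^'n \<Rightarrow> real" where
  "fobj \<sigma> \<gamma>P c gam nu rho zQ zS =
     (let N = real CARD('n) in
      - (1 / N) * (\<Sum>i\<in>UNIV.
            (zQ$i$i)^2 / (2 * c i)
          + gam i / 2 * (\<Sum>j\<in>UNIV. (nu j)^2 * (zQ$i$j)^2)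
          + gam i * \<sigma>^2 / 2 * (zS$i)^2
          + gam i * \<sigma> / sqrt N * zS$i * (\<Sum>j\<in>UNIV. rho j * nu j * zQ$i$j)
          - zQ$i$i / c i)
      - \<gamma>P / (2 * N^2) * (\<Sum>i\<in>UNIV.
            (nu i - nu i * (\<Sum>j\<in>UNIV. zQ$j$i) - rho i * \<sigma> / sqrt N * (\<Sum>j\<in>UNIV. zS$j))^2
          + (1 - (rho i)^2) * \<sigma>^2 / N * (\<Sum>j\<in>UNIV. zS$j)^2))"

definition is_maximiser :: "(real^'n^'n \<Rightarrow> real^'n \<Rightarrow> real) \<Rightarrow> real^'n^'n \<Rightarrow> real^'n \<Rightarrow> bool" where
  "is_maximiser F zQ zS \<longleftrightarrow> (\<forall>wQ wS. F wQ wS \<le> F zQ zS)"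

definition A_const :: "real \<Rightarrow> real \<Rightarrow> real \<Rightarrow> real" where
  "A_const gam c nu = gam + 1 / (c * nu^2)"

definition eta :: "real \<Rightarrow> real \<Rightarrow> real \<Rightarrow> real \<Rightarrow> real \<Rightarrow> real" where
  "eta n gam c nu rho = rho^2 * ((n - 1) + gam / A_const gam c nu)"

definition z0s :: "real \<Rightarrow> real \<Rightarrow> real \<Rightarrow> real \<Rightarrow> real \<Rightarrow> real \<Rightarrow> real" where
  "z0s n \<sigma> c gam nu rho =
     - (sqrt n / \<sigma>) * (rho / (A_const gam c nu * c * nu)) * (1 / (n - eta n gam c nu rho))"

definition z0o :: "real \<Rightarrow> real \<Rightarrow> real \<Rightarrow> real \<Rightarrow> real \<Rightarrow> real" where
  "z0o n c gam nu rho =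
     (rho^2 / (A_const gam c nu * c * nu^2)) * (1 / (n - eta n gam c nu rho))"

definition z0d :: "real \<Rightarrow> real \<Rightarrow> real \<Rightarrow> real \<Rightarrow> real \<Rightarrow> real" where
  "z0d n c gam nu rho =
     (1 / (A_const gam c nu * c * nu^2))
       * (1 + (gam * rho^2 / A_const gam c nu) / (n - eta n gam c nu rho))"

definition nu_dagger :: "real \<Rightarrow> real \<Rightarrow> real \<Rightarrow> real \<Rightarrow> real" where
  "nu_dagger n c gam rho = sqrt ((n * (1 - rho^2) + rho^2) / (gam * c * n * (1 - rho^2)))"

end

theory Submission
  imports Defs
begin


definition Dn :: "real \<Rightarrow> real \<Rightarrow> real \<Rightarrow> real \<Rightarrow> real \<Rightarrow> real" where
  "Dn n c gam nu rho = n*(1-rho^2) + rho^2 + gam*c*nu^2*n*(1-rho^2)"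

lemma Dn_pos: "n \<ge> 1 \<Longrightarrow> c > 0 \<Longrightarrow> gam > 0 \<Longrightarrow> rho^2 < 1 \<Longrightarrow> Dn n c gam nu rho > 0"
proof -
  assume a: "n \<ge> 1" "c > 0" "gam > 0" "rho^2 < 1"
  have "n*(1-rho^2) > 0" using a by simp
  moreover have "gam*c*nu^2*n*(1-rho^2) \<ge> 0" using a by simp
  ultimately show ?thesis unfolding Dn_def by (smt (verit) zero_le_power2)
qed

lemma s_pos: assumes "(c::real) > 0" "gam > 0" "nu > 0" shows "gam*c*nu^2 > 0"
  using assms by (intro mult_pos_pos[OF mult_pos_pos]) auto

lemma A_eq: assumes "c > 0" "nu > 0" shows "A_const gam c nu = (1 + gam*c*nu^2)/(c*nu^2)"
  unfolding A_const_def using assms by (simp add: field_simps)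

lemma gA: assumes "c > 0" "nu > 0" "gam > 0" shows "gam / A_const gam c nu = gam*c*nu^2/(1 + gam*c*nu^2)"
proof -
  have "1 + gam*c*nu^2 > 0" using s_pos[of c gam nu] assms by linarith
  then show ?thesis unfolding A_eq[OF assms(1,2)] using assms by (simp add: field_simps)
qed

lemma n_eta: assumes "n \<ge> 1" "c > 0" "gam > 0" "nu > 0" "rho^2 < 1"
  shows "n - eta n gam c nu rho = Dn n c gam nu rho / (1 + gam*c*nu^2)"
proof -
  define s where "s = gam*c*nu^2"
  have p: "1 + s > 0" using s_pos[of c gam nu] assms s_def by linarith
  have "n - eta n gam c nu rho = n - rho^2 * ((n - 1) + s/(1+s))"
    unfolding eta_def gA[OF assms(2,4,3)] s_def by simp
  also have "\<dots> = (n*(1-rho^2) + rho^2 + s*n*(1-rho^2))/(1+s)"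
    using p by (simp add: field_simps)
  finally show ?thesis unfolding Dn_def s_def by simp
qed

lemma Acnu2: assumes "c > 0" "nu > 0" shows "A_const gam c nu * c * nu^2 = 1 + gam*c*nu^2"
  unfolding A_const_def using assms by (simp add: field_simps)

lemma z0o_cf: assumes "n \<ge> 1" "c > 0" "gam > 0" "nu > 0" "rho^2 < 1"
  shows "z0o n c gam nu rho = rho^2 / Dn n c gam nu rho"
proof -
  define s where "s = gam*c*nu^2"
  define D where "D = Dn n c gam nu rho"
  have p: "1 + s > 0" using s_pos[of c gam nu] assms s_def by linarith
  have d: "D > 0" using Dn_pos[of n c gam rho nu] assms D_def by simp
  define t where "t = 1 + s"
  have "t > 0" using p t_def by simp
  then show ?thesis unfolding z0o_def Acnu2[OF assms(2,4)] n_eta[OF assms] s_def[symmetric] D_def[symmetric] t_def[symmetric]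
    using d by (simp add: field_simps)
qed

lemma z0d_cf: assumes "n \<ge> 1" "c > 0" "gam > 0" "nu > 0" "rho^2 < 1"
  shows "z0d n c gam nu rho = (n*(1-rho^2) + rho^2) / Dn n c gam nu rho"
proof -
  define s where "s = gam*c*nu^2"
  define D where "D = Dn n c gam nu rho"
  have p: "1 + s > 0" using s_pos[of c gam nu] assms s_def by linarith
  have d: "D > 0" using Dn_pos[of n c gam rho nu] assms D_def by simp
  have e: "gam * rho^2 / A_const gam c nu = s*rho^2/(1+s)"
    using gA[OF assms(2,4,3)] s_def by (metis times_divide_eq_left mult.commute)
  have dd: "D = n*(1-rho^2) + rho^2 + s*n*(1-rho^2)" unfolding D_def Dn_def s_def by simp
  define t where "t = 1 + s"
  have tp: "t > 0" using p t_def by simp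
  have "z0d n c gam nu rho = 1/t * (1 + (s*rho^2/t) / (D/t))"
    unfolding z0d_def Acnu2[OF assms(2,4)] n_eta[OF assms] e s_def[symmetric] D_def[symmetric] t_def[symmetric] by simp
  also have "\<dots> = (D + s*rho^2)/((1+s)*D)" using tp d unfolding t_def[symmetric] by (simp add: field_simps)
  also have "D + s*rho^2 = (1+s)*(n*(1-rho^2)+rho^2)" unfolding dd by (simp add: algebra_simps)
  also have "(1+s)*(n*(1-rho^2)+rho^2)/((1+s)*D) = (n*(1-rho^2) + rho^2) / D" using p d by simp
  finally show ?thesis unfolding D_def .
qed

lemma z0s_cf: assumes "n \<ge> 1" "c > 0" "gam > 0" "nu > 0" "rho^2 < 1" "\<sigma> > 0"
  shows "z0s n \<sigma> c gam nu rho = - (sqrt n / \<sigma>) * rho * nu / Dn n c gam nu rho"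
proof -
  define s where "s = gam*c*nu^2"
  define D where "D = Dn n c gam nu rho"
  have p: "1 + s > 0" using s_pos[of c gam nu] assms s_def by linarith
  have d: "D > 0" using Dn_pos[of n c gam rho nu] assms D_def by simp
  have e: "A_const gam c nu * c * nu = (1 + s) / nu"
    unfolding A_const_def s_def using assms by (simp add: field_simps power2_eq_square)
  define t where "t = 1 + s"
  have "t > 0" using p t_def by simp
  then show ?thesis
  unfolding z0s_def e n_eta[OF assms(1-5)] s_def[symmetric] D_def[symmetric] t_def[symmetric] using d assms
  by (simp add: field_simps)
qed



lemma fracmono: "0 \<le> (a::real) \<Longrightarrow> a < b \<Longrightarrow> 0 < D2 \<Longrightarrow> D2 \<le> D1 \<Longrightarrow> a/D1 < b/D2"
proof -
  assume h: "0 \<le> a" "a < b" "0 < D2" "D2 \<le> D1"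
  have "a/D1 \<le> a/D2" using h by (intro divide_left_mono) auto
  also have "\<dots> < b/D2" using h by (simp add: divide_strict_right_mono)
  finally show ?thesis .
qed

lemma sq_less: "\<bar>(x::real)\<bar> < \<bar>y\<bar> \<Longrightarrow> x^2 < y^2"
  using abs_le_square_iff[of y x] by linarith

lemma Dn_alt: "Dn n c gam nu rho = n*(1 + gam*c*nu^2) - rho^2*(n*(1+gam*c*nu^2) - 1)"
  unfolding Dn_def by (simp add: algebra_simps)

lemma Dn_rho_anti: assumes "n \<ge> 1" "c > 0" "gam > 0" "r1^2 \<le> r2^2"
  shows "Dn n c gam nu r2 \<le> Dn n c gam nu r1"
proof -
  have s: "gam*c*nu^2 \<ge> 0" using assms by simp
  have "n*(1+gam*c*nu^2) - 1 \<ge> 0"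
  proof -
    have "n*(1+gam*c*nu^2) \<ge> 1*(1+0)" using assms s by (intro mult_mono) auto
    then show ?thesis by simp
  qed
  then have "r1^2*(n*(1+gam*c*nu^2) - 1) \<le> r2^2*(n*(1+gam*c*nu^2) - 1)"
    using assms by (intro mult_right_mono) auto
  then show ?thesis unfolding Dn_alt by linarith
qed

lemma Dn_s_mono: assumes "n \<ge> 1" "rho^2 < 1" "gam*c1 * v1^2 < gam*c2 * v2^2"
  shows "Dn n c1 gam v1 rho < Dn n c2 gam v2 rho"
proof -
  have "n*(1-rho^2) > 0" using assms by simp
  from mult_strict_right_mono[OF assms(3) this]
  have "gam*c1 * v1^2*(n*(1-rho^2)) < gam*c2 * v2^2*(n*(1-rho^2))" .
  then show ?thesis unfolding Dn_def by (simp add: algebra_simps)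
qed

lemma abs_z0s: assumes "n \<ge> 1" "c > 0" "gam > 0" "nu > 0" "rho^2 < 1" "\<sigma> > 0"
  shows "\<bar>z0s n \<sigma> c gam nu rho\<bar> = (sqrt n / \<sigma> * nu) * (\<bar>rho\<bar> / Dn n c gam nu rho)"
  unfolding z0s_cf[OF assms] using Dn_pos[of n c gam rho nu] assms
  by (simp add: abs_mult abs_divide)



lemma m_pos: "n \<ge> 1 \<Longrightarrow> rho^2 < 1 \<Longrightarrow> n*(1-rho^2) + rho^2 > (0::real)"
proof -
  assume "n \<ge> 1" "rho^2 < 1"
  then have "n*(1-rho^2) > 0" by simp
  then show ?thesis by (smt (verit) zero_le_power2)
qed

lemma eta_bounds: assumes "n \<ge> 1" "c > 0" "gam > 0" "nu > 0" "rho^2 < 1"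
  shows "0 \<le> eta n gam c nu rho \<and> eta n gam c nu rho < n"
proof
  have "gam / A_const gam c nu \<ge> 0" unfolding gA[OF assms(2,4,3)] using s_pos[OF assms(2,3,4)] by simp
  then show "0 \<le> eta n gam c nu rho" unfolding eta_def using assms by simp
  have "1 + gam*c*nu^2 > 0" using s_pos[OF assms(2,3,4)] by linarith
  then have "Dn n c gam nu rho / (1 + gam*c*nu^2) > 0"
    using Dn_pos[of n c gam rho nu] assms by simp
  then show "eta n gam c nu rho < n" using n_eta[OF assms] by linarith
qed

lemma kmono: "(K::real) \<ge> 0 \<Longrightarrow> x \<le> y \<Longrightarrow> (P \<longrightarrow> x < y) \<Longrightarrow> (P \<longrightarrow> K > 0) \<Longrightarrow> K*x \<le> K*y \<and> (P \<longrightarrow> K*x < K*y)"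
  by (auto intro: mult_left_mono mult_strict_left_mono)

lemma z0s_rho: assumes "n \<ge> 1" "c > 0" "gam > 0" "nu > 0" "\<sigma> > 0" "\<bar>r1\<bar> < \<bar>r2\<bar>" "\<bar>r2\<bar> < 1"
  shows "\<bar>z0s n \<sigma> c gam nu r1\<bar> < \<bar>z0s n \<sigma> c gam nu r2\<bar>"
proof -
  have h2: "r2^2 < 1" using assms sq_less[of r2 1] by simp
  have h1: "r1^2 < 1" using assms sq_less[of r1 1] by simp
  have k: "sqrt n / \<sigma> * nu > 0" using assms by simp
  have "\<bar>r1\<bar> / Dn n c gam nu r1 < \<bar>r2\<bar> / Dn n c gam nu r2"
    apply (rule fracmono)
    using assms h2 Dn_pos[of n c gam r2 nu] Dn_rho_anti[of n c gam r1 r2 nu] sq_less[OF assms(6)] by auto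
  then show ?thesis unfolding abs_z0s[OF assms(1-4) h1 assms(5)] abs_z0s[OF assms(1-4) h2 assms(5)]
    using k by (metis mult_strict_left_mono)
qed

lemma z0s_c: assumes "n \<ge> 1" "c1 > 0" "c1 < c2" "gam > 0" "nu > 0" "\<sigma> > 0" "rho^2 < 1"
  shows "\<bar>z0s n \<sigma> c2 gam nu rho\<bar> \<le> \<bar>z0s n \<sigma> c1 gam nu rho\<bar>
        \<and> (rho \<noteq> 0 \<longrightarrow> \<bar>z0s n \<sigma> c2 gam nu rho\<bar> < \<bar>z0s n \<sigma> c1 gam nu rho\<bar>)"
proof -
  have c2: "c2 > 0" using assms by simp
  have k: "sqrt n / \<sigma> * nu > 0" using assms by simp
  have "gam*c1*nu^2 < gam*c2*nu^2" using assms by simp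
  then have D: "Dn n c1 gam nu rho < Dn n c2 gam nu rho" using Dn_s_mono assms by blast
  have D1: "Dn n c1 gam nu rho > 0" using Dn_pos assms by blast
  have a: "\<bar>rho\<bar> / Dn n c2 gam nu rho \<le> \<bar>rho\<bar> / Dn n c1 gam nu rho"
    using D D1 by (intro divide_left_mono) auto
  have b: "rho \<noteq> 0 \<longrightarrow> \<bar>rho\<bar> / Dn n c2 gam nu rho < \<bar>rho\<bar> / Dn n c1 gam nu rho"
    using D D1 by (auto intro!: divide_strict_left_mono)
  show ?thesis unfolding abs_z0s[OF assms(1,2,4,5,7,6)] abs_z0s[OF assms(1) c2 assms(4,5,7,6)]
    by (rule kmono) (use a b k in auto)
qed

lemma nud_sq: assumes "n \<ge> 1" "c > 0" "gam > 0" "rho^2 < 1"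
  shows "gam*c*n*(1-rho^2) * (nu_dagger n c gam rho)^2 = n*(1-rho^2) + rho^2"
proof -
  define L where "L = gam*c*n*(1-rho^2)"
  define m where "m = n*(1-rho^2) + rho^2"
  have L: "L > 0" unfolding L_def using assms by simp
  have m: "m > 0" unfolding m_def using m_pos assms by blast
  have "(nu_dagger n c gam rho)^2 = m / L"
    unfolding nu_dagger_def L_def[symmetric] m_def[symmetric] using L m by simp
  then show ?thesis unfolding L_def[symmetric] m_def[symmetric] using L by simp
qed

lemma nud_nonneg: assumes "n \<ge> 1" "c > 0" "gam > 0" "rho^2 < 1"
  shows "nu_dagger n c gam rho \<ge> 0"
proof -
  have L: "gam*c*n*(1-rho^2) > 0" using assms by simp
  show ?thesis unfolding nu_dagger_def using L m_pos[OF assms(1,4)] by simp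
qed

lemma hv_less: assumes "L > 0" "0 < v1" "v1 < v2" "L* v1* v2 < (m::real)" "m > 0"
  shows "v1/(m + L* v1^2) < v2/(m + L* v2^2)"
proof -
  have p1: "m + L* v1^2 > 0" "m + L* v2^2 > 0" using assms by (simp_all add: add_pos_nonneg)
  have "v2*(m + L* v1^2) - v1*(m + L* v2^2) = (v2 - v1)*(m - L* v1* v2)" by (simp add: algebra_simps power2_eq_square)
  also have "\<dots> > 0" using assms by simp
  finally show ?thesis using p1 by (simp add: field_simps)
qed

lemma hv_gt: assumes "L > 0" "0 < v1" "v1 < v2" "L* v1* v2 > (m::real)" "m > 0"
  shows "v2/(m + L* v2^2) < v1/(m + L* v1^2)"
proof -
  have p1: "m + L* v1^2 > 0" "m + L* v2^2 > 0" using assms by (simp_all add: add_pos_nonneg)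
  have "v1*(m + L* v2^2) - v2*(m + L* v1^2) = (v2 - v1)*(L* v1* v2 - m)" by (simp add: algebra_simps power2_eq_square)
  also have "\<dots> > 0" using assms by simp
  finally show ?thesis using p1 by (simp add: field_simps)
qed

lemma Dn_nu: "Dn n c gam v rho = (n*(1-rho^2) + rho^2) + (gam*c*n*(1-rho^2))* v^2"
  unfolding Dn_def by (simp add: algebra_simps)

lemma abs_z0s_nu: assumes "n \<ge> 1" "c > 0" "gam > 0" "v > 0" "rho^2 < 1" "\<sigma> > 0"
  shows "\<bar>z0s n \<sigma> c gam v rho\<bar> = (sqrt n / \<sigma> * \<bar>rho\<bar>) * (v / ((n*(1-rho^2) + rho^2) + (gam*c*n*(1-rho^2))* v^2))"
  unfolding z0s_cf[OF assms] Dn_nu[symmetric] using Dn_pos[of n c gam rho v] assms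
  by (simp add: abs_mult abs_divide)

lemma z0s_nu_up: assumes "n \<ge> 1" "c > 0" "gam > 0" "\<sigma> > 0" "rho^2 < 1"
    "0 < v1" "v1 < v2" "v2 \<le> nu_dagger n c gam rho"
  shows "\<bar>z0s n \<sigma> c gam v1 rho\<bar> \<le> \<bar>z0s n \<sigma> c gam v2 rho\<bar>
        \<and> (rho \<noteq> 0 \<longrightarrow> \<bar>z0s n \<sigma> c gam v1 rho\<bar> < \<bar>z0s n \<sigma> c gam v2 rho\<bar>)"
proof -
  define L where "L = gam*c*n*(1-rho^2)"
  define m where "m = n*(1-rho^2) + rho^2"
  have L: "L > 0" unfolding L_def using assms by simp
  have m: "m > 0" unfolding m_def using m_pos assms by blast
  have "v2^2 \<le> (nu_dagger n c gam rho)^2" using assms by (intro power_mono) auto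
  then have "L* v2^2 \<le> m" using nud_sq[OF assms(1,2,3,5)] L unfolding L_def m_def
    by (metis mult_left_mono less_imp_le)
  moreover have "L* v1* v2 < L* v2* v2" using L assms by simp
  ultimately have "L* v1* v2 < m" by (simp add: power2_eq_square mult.assoc)
  from hv_less[OF L assms(6,7) this m]
  have h: "v1/(m + L* v1^2) < v2/(m + L* v2^2)" .
  have k: "sqrt n / \<sigma> * \<bar>rho\<bar> \<ge> 0" "rho \<noteq> 0 \<longrightarrow> sqrt n / \<sigma> * \<bar>rho\<bar> > 0" using assms by auto
  have v2: "v2 > 0" using assms by simp
  show ?thesis unfolding abs_z0s_nu[OF assms(1-3,6,5,4)] abs_z0s_nu[OF assms(1-3) v2 assms(5,4)]
    L_def[symmetric] m_def[symmetric] by (rule kmono) (use h k in auto)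
qed

lemma z0s_nu_down: assumes "n \<ge> 1" "c > 0" "gam > 0" "\<sigma> > 0" "rho^2 < 1"
    "nu_dagger n c gam rho \<le> v1" "v1 < v2"
  shows "\<bar>z0s n \<sigma> c gam v2 rho\<bar> \<le> \<bar>z0s n \<sigma> c gam v1 rho\<bar>
        \<and> (rho \<noteq> 0 \<longrightarrow> \<bar>z0s n \<sigma> c gam v2 rho\<bar> < \<bar>z0s n \<sigma> c gam v1 rho\<bar>)"
proof -
  define L where "L = gam*c*n*(1-rho^2)"
  define m where "m = n*(1-rho^2) + rho^2"
  have L: "L > 0" unfolding L_def using assms by simp
  have m: "m > 0" unfolding m_def using m_pos assms by blast
  have "nu_dagger n c gam rho \<ge> 0" using nud_nonneg assms by blast
  then have v1: "v1 > 0"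
  proof -
    have "nu_dagger n c gam rho \<noteq> 0"
    proof
      assume "nu_dagger n c gam rho = 0"
      then show False using nud_sq[OF assms(1,2,3,5)] m unfolding m_def by simp
    qed
    then show ?thesis using \<open>nu_dagger n c gam rho \<ge> 0\<close> assms(6) by linarith
  qed
  have "(nu_dagger n c gam rho)^2 \<le> v1^2" using assms \<open>nu_dagger n c gam rho \<ge> 0\<close> by (intro power_mono) auto
  then have "m \<le> L* v1^2" using nud_sq[OF assms(1,2,3,5)] L unfolding L_def m_def
    by (metis mult_left_mono less_imp_le)
  moreover have "L* v1* v1 < L* v1* v2" using L v1 assms by simp
  ultimately have "L* v1* v2 > m" by (simp add: power2_eq_square mult.assoc)
  from hv_gt[OF L v1 assms(7) this m]
  have h: "v2/(m + L* v2^2) < v1/(m + L* v1^2)" .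
  have k: "sqrt n / \<sigma> * \<bar>rho\<bar> \<ge> 0" "rho \<noteq> 0 \<longrightarrow> sqrt n / \<sigma> * \<bar>rho\<bar> > 0" using assms by auto
  have v2: "v2 > 0" using assms v1 by simp
  show ?thesis unfolding abs_z0s_nu[OF assms(1-3) v1 assms(5,4)] abs_z0s_nu[OF assms(1-3) v2 assms(5,4)]
    L_def[symmetric] m_def[symmetric] by (rule kmono) (use h k in auto)
qed



lemma dec_frac: "0 < (D1::real) \<Longrightarrow> D1 < D2 \<Longrightarrow> 0 \<le> a \<Longrightarrow> a/D2 \<le> a/D1 \<and> (a > 0 \<longrightarrow> a/D2 < a/D1)"
  by (auto intro: divide_left_mono divide_strict_left_mono)

lemma z0o_rho: assumes "n \<ge> 1" "c > 0" "gam > 0" "nu > 0" "\<bar>r1\<bar> < \<bar>r2\<bar>" "\<bar>r2\<bar> < 1"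
  shows "z0o n c gam nu r1 < z0o n c gam nu r2"
proof -
  have h2: "r2^2 < 1" using assms sq_less[of r2 1] by simp
  have h1: "r1^2 < 1" using assms sq_less[of r1 1] by simp
  show ?thesis unfolding z0o_cf[OF assms(1-4) h1] z0o_cf[OF assms(1-4) h2]
    apply (rule fracmono)
    using assms h2 Dn_pos[of n c gam r2 nu] Dn_rho_anti[of n c gam r1 r2 nu] sq_less[OF assms(5)] by auto
qed

lemma z0o_c: assumes "n \<ge> 1" "c1 > 0" "c1 < c2" "gam > 0" "nu > 0" "rho^2 < 1"
  shows "z0o n c2 gam nu rho \<le> z0o n c1 gam nu rho
        \<and> (rho \<noteq> 0 \<longrightarrow> z0o n c2 gam nu rho < z0o n c1 gam nu rho)"
proof -
  have c2: "c2 > 0" using assms by simp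
  have "gam*c1*nu^2 < gam*c2*nu^2" using assms by simp
  then have D: "Dn n c1 gam nu rho < Dn n c2 gam nu rho" using Dn_s_mono assms by blast
  have D1: "Dn n c1 gam nu rho > 0" using Dn_pos assms by blast
  show ?thesis unfolding z0o_cf[OF assms(1,2,4,5,6)] z0o_cf[OF assms(1) c2 assms(4,5,6)]
    using dec_frac[OF D1 D, of "rho^2"] by simp
qed

lemma z0o_nu: assumes "n \<ge> 1" "c > 0" "v1 > 0" "v1 < v2" "gam > 0" "rho^2 < 1"
  shows "z0o n c gam v2 rho \<le> z0o n c gam v1 rho
        \<and> (rho \<noteq> 0 \<longrightarrow> z0o n c gam v2 rho < z0o n c gam v1 rho)"
proof -
  have v2: "v2 > 0" using assms by simp
  have "v1^2 < v2^2" using assms by (intro power_strict_mono) auto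
  then have "gam*c* v1^2 < gam*c* v2^2" using assms by simp
  then have D: "Dn n c gam v1 rho < Dn n c gam v2 rho" using Dn_s_mono assms by blast
  have D1: "Dn n c gam v1 rho > 0" using Dn_pos assms by blast
  show ?thesis unfolding z0o_cf[OF assms(1,2,5,3,6)] z0o_cf[OF assms(1,2,5) v2 assms(6)]
    using dec_frac[OF D1 D, of "rho^2"] by simp
qed

lemma z0d_c: assumes "n \<ge> 1" "c1 > 0" "c1 < c2" "gam > 0" "nu > 0" "rho^2 < 1"
  shows "z0d n c2 gam nu rho < z0d n c1 gam nu rho"
proof -
  have c2: "c2 > 0" using assms by simp
  have "gam*c1*nu^2 < gam*c2*nu^2" using assms by simp
  then have D: "Dn n c1 gam nu rho < Dn n c2 gam nu rho" using Dn_s_mono assms by blast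
  have D1: "Dn n c1 gam nu rho > 0" using Dn_pos assms by blast
  show ?thesis unfolding z0d_cf[OF assms(1,2,4,5,6)] z0d_cf[OF assms(1) c2 assms(4,5,6)]
    using dec_frac[OF D1 D, of "n*(1-rho^2) + rho^2"] m_pos[OF assms(1,6)] by simp
qed

lemma z0d_nu: assumes "n \<ge> 1" "c > 0" "v1 > 0" "v1 < v2" "gam > 0" "rho^2 < 1"
  shows "z0d n c gam v2 rho < z0d n c gam v1 rho"
proof -
  have v2: "v2 > 0" using assms by simp
  have "v1^2 < v2^2" using assms by (intro power_strict_mono) auto
  then have "gam*c* v1^2 < gam*c* v2^2" using assms by simp
  then have D: "Dn n c gam v1 rho < Dn n c gam v2 rho" using Dn_s_mono assms by blast
  have D1: "Dn n c gam v1 rho > 0" using Dn_pos assms by blast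
  show ?thesis unfolding z0d_cf[OF assms(1,2,5,3,6)] z0d_cf[OF assms(1,2,5) v2 assms(6)]
    using dec_frac[OF D1 D, of "n*(1-rho^2) + rho^2"] m_pos[OF assms(1,6)] by simp
qed

lemma z0d_rho: assumes "n \<ge> 1" "c > 0" "gam > 0" "nu > 0" "\<bar>r1\<bar> < \<bar>r2\<bar>" "\<bar>r2\<bar> < 1"
  shows "z0d n c gam nu r1 < z0d n c gam nu r2"
proof -
  have h2: "r2^2 < 1" using assms sq_less[of r2 1] by simp
  have h1: "r1^2 < 1" using assms sq_less[of r1 1] by simp
  have lt: "r1^2 < r2^2" using sq_less[OF assms(5)] .
  define s where "s = gam*c*nu^2"
  have s: "s > 0" unfolding s_def using s_pos assms by blast
  define m1 where "m1 = n*(1-r1^2) + r1^2"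
  define m2 where "m2 = n*(1-r2^2) + r2^2"
  have D1: "Dn n c gam nu r1 = m1 + s*n*(1-r1^2)" unfolding Dn_def m1_def s_def by simp
  have D2: "Dn n c gam nu r2 = m2 + s*n*(1-r2^2)" unfolding Dn_def m2_def s_def by simp
  have p1: "m1 + s*n*(1-r1^2) > 0" using Dn_pos[of n c gam r1 nu] assms h1 D1 by simp
  have p2: "m2 + s*n*(1-r2^2) > 0" using Dn_pos[of n c gam r2 nu] assms h2 D2 by simp
  have "m2*(m1 + s*n*(1-r1^2)) - m1*(m2 + s*n*(1-r2^2)) = s*n*(r2^2 - r1^2)"
    unfolding m1_def m2_def by (simp add: algebra_simps)
  also have "\<dots> > 0" using s assms lt by simp
  finally have "m1*(m2 + s*n*(1-r2^2)) < m2*(m1 + s*n*(1-r1^2))" by simp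
  then have "m1/(m1 + s*n*(1-r1^2)) < m2/(m2 + s*n*(1-r2^2))" using p1 p2 by (simp add: field_simps)
  then show ?thesis unfolding z0d_cf[OF assms(1-4) h1] z0d_cf[OF assms(1-4) h2] D1 D2 m1_def m2_def .
qed



definition Gr :: "real \<Rightarrow> real \<Rightarrow> real \<Rightarrow> real \<Rightarrow> real \<Rightarrow> 'n::finite \<Rightarrow> real^'n \<Rightarrow> real \<Rightarrow> real" where
  "Gr \<sigma> c gam nu rho i x s = (x$i)^2/(2*c) + gam*nu^2/2 * (\<Sum>j\<in>UNIV. (x$j)^2) + gam*\<sigma>^2/2* s^2
     + gam*\<sigma>*rho*nu/sqrt (real CARD('n)) * s * (\<Sum>j\<in>UNIV. x$j) - x$i/c"

definition Qr :: "real \<Rightarrow> real \<Rightarrow> real \<Rightarrow> real \<Rightarrow> real \<Rightarrow> 'n::finite \<Rightarrow> real^'n \<Rightarrow> real \<Rightarrow> real" where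
  "Qr \<sigma> c gam nu rho i w u = (w$i)^2/(2*c) + gam*nu^2/2 * (\<Sum>j\<in>UNIV. (w$j)^2) + gam*\<sigma>^2/2* u^2
     + gam*\<sigma>*rho*nu/sqrt (real CARD('n)) * u * (\<Sum>j\<in>UNIV. w$j)"

definition pen :: "real \<Rightarrow> real \<Rightarrow> real \<Rightarrow> real^'n::finite^'n \<Rightarrow> real^'n \<Rightarrow> real" where
  "pen \<sigma> nu rho zQ zS = 1 / (2 * (real CARD('n))^2) * (\<Sum>i\<in>UNIV.
            (nu - nu * (\<Sum>j\<in>UNIV. zQ$j$i) - rho * \<sigma> / sqrt (real CARD('n)) * (\<Sum>j\<in>UNIV. zS$j))^2
          + (1 - rho^2) * \<sigma>^2 / (real CARD('n)) * (\<Sum>j\<in>UNIV. zS$j)^2)"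

lemma fobj0: "fobj \<sigma> 0 (\<lambda>_::'n::finite. c) (\<lambda>_. gam) (\<lambda>_. nu) (\<lambda>_. rho) zQ zS
   = -(1/real CARD('n)) * (\<Sum>i\<in>UNIV. Gr \<sigma> c gam nu rho i (zQ$i) (zS$i))"
proof -
  have "\<And>i. (zQ$i$i)^2 / (2 * c)
          + gam / 2 * (\<Sum>j\<in>UNIV. nu^2 * (zQ$i$j)^2)
          + gam * \<sigma>^2 / 2 * (zS$i)^2
          + gam * \<sigma> / sqrt (real CARD('n)) * zS$i * (\<Sum>j\<in>UNIV. rho * nu * zQ$i$j)
          - zQ$i$i / c = Gr \<sigma> c gam nu rho i (zQ$i) (zS$i)"
    unfolding Gr_def by (simp add: sum_distrib_left[symmetric] algebra_simps)
  then show ?thesis unfolding fobj_def Let_def by simp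
qed

lemma fobj_pen: "fobj \<sigma> gP (\<lambda>_::'n::finite. c) (\<lambda>_. gam) (\<lambda>_. nu) (\<lambda>_. rho) zQ zS
   = fobj \<sigma> 0 (\<lambda>_::'n::finite. c) (\<lambda>_. gam) (\<lambda>_. nu) (\<lambda>_. rho) zQ zS - gP * pen \<sigma> nu rho zQ zS"
  unfolding fobj_def pen_def Let_def by simp

lemma pen_nonneg: "rho^2 \<le> 1 \<Longrightarrow> pen \<sigma> nu rho zQ zS \<ge> 0"
  unfolding pen_def by (intro mult_nonneg_nonneg sum_nonneg add_nonneg_nonneg) auto



lemma sum_if_mult: fixes i :: "'a::finite" shows "(\<Sum>j\<in>UNIV. (if i = j then a else b) * (f j::real)) = b * (\<Sum>j\<in>UNIV. f j) + (a - b) * f i"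
proof -
  have "(\<Sum>j\<in>UNIV. (if i = j then a else b) * f j) = (\<Sum>j\<in>UNIV. b * f j + (if i = j then (a - b) * f j else 0))"
    by (rule sum.cong) (auto simp: algebra_simps)
  also have "\<dots> = b * (\<Sum>j\<in>UNIV. f j) + (a - b) * f i"
    by (simp add: sum.distrib sum_distrib_left sum.delta sum.delta')
  finally show ?thesis .
qed

lemma alg_row:
  fixes c gam nu \<sigma> k zd zo zs wi S0 S1 S2 X0 u :: real
  assumes "c \<noteq> 0"
  shows "(zd + wi)^2/(2*c) + gam*nu^2/2 * (S0 + 2*(zo*S1 + (zd-zo)*wi) + S2) + gam*\<sigma>^2/2*(zs+u)^2
     + k * (zs + u) * (X0 + S1) - (zd + wi)/c
   = (zd^2/(2*c) + gam*nu^2/2 * S0 + gam*\<sigma>^2/2*zs^2 + k * zs * X0 - zd/c)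
     + (wi^2/(2*c) + gam*nu^2/2 * S2 + gam*\<sigma>^2/2*u^2 + k * u * S1)
     + wi * (zd/c + gam*nu^2*(zd-zo) - 1/c) + S1 * (gam*nu^2*zo + k*zs) + u * (gam*\<sigma>^2*zs + k*X0)"
  using assms by (simp add: field_simps power2_eq_square)

lemma row_decomp:
  fixes x :: "real^'n::finite"
  assumes c: "c \<noteq> 0"
    and F1: "gam*nu^2*zo + gam*\<sigma>*rho*nu/sqrt (real CARD('n)) * zs = 0"
    and F2: "zd/c + gam*nu^2*(zd-zo) - 1/c = 0"
    and F3: "gam*\<sigma>^2*zs + gam*\<sigma>*rho*nu/sqrt (real CARD('n)) * (real CARD('n)*zo + (zd - zo)) = 0"
  shows "Gr \<sigma> c gam nu rho i x s = Gr \<sigma> c gam nu rho i (\<chi> j. if i = j then zd else zo) zs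
           + Qr \<sigma> c gam nu rho i (x - (\<chi> j. if i = j then zd else zo)) (s - zs)"
proof -
  define x0 :: "real^'n" where "x0 = (\<chi> j. if i = j then zd else zo)"
  define w where "w = x - x0"
  define u where "u = s - zs"
  define k where "k = gam*\<sigma>*rho*nu/sqrt (real CARD('n))"
  have xw: "x = x0 + w" unfolding w_def by simp
  have su: "s = zs + u" unfolding u_def by simp
  have x0j: "\<And>j. x0$j = (if i = j then zd else zo)" unfolding x0_def by simp
  have e1: "(\<Sum>j\<in>UNIV. (x$j)^2) = (\<Sum>j\<in>UNIV. (x0$j)^2) + 2*(zo*(\<Sum>j\<in>UNIV. w$j) + (zd-zo)*w$i) + (\<Sum>j\<in>UNIV. (w$j)^2)"
  proof -
    have "(\<Sum>j\<in>UNIV. (x$j)^2) = (\<Sum>j\<in>UNIV. (x0$j)^2 + 2*(x0$j * w$j) + (w$j)^2)"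
      unfolding xw by (rule sum.cong) (simp_all add: power2_sum algebra_simps)
    also have "\<dots> = (\<Sum>j\<in>UNIV. (x0$j)^2) + 2*(\<Sum>j\<in>UNIV. x0$j * w$j) + (\<Sum>j\<in>UNIV. (w$j)^2)"
      by (simp add: sum.distrib sum_distrib_left)
    also have "(\<Sum>j\<in>UNIV. x0$j * w$j) = zo*(\<Sum>j\<in>UNIV. w$j) + (zd-zo)*w$i"
      unfolding x0j sum_if_mult by simp
    finally show ?thesis .
  qed
  have e2: "(\<Sum>j\<in>UNIV. x$j) = (real CARD('n)*zo + (zd - zo)) + (\<Sum>j\<in>UNIV. w$j)"
  proof -
    have "(\<Sum>j\<in>UNIV. x$j) = (\<Sum>j\<in>UNIV. x0$j) + (\<Sum>j\<in>UNIV. w$j)"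
      unfolding xw by (simp add: sum.distrib)
    also have "(\<Sum>j\<in>UNIV. x0$j) = (\<Sum>j\<in>UNIV. x0$j * 1)" by simp
    also have "\<dots> = real CARD('n)*zo + (zd - zo)" unfolding x0j sum_if_mult by simp
    finally show ?thesis .
  qed
  have e3: "x$i = zd + w$i" unfolding xw x0_def by simp
  have "Gr \<sigma> c gam nu rho i x s = (zd + w$i)^2/(2*c) + gam*nu^2/2 * ((\<Sum>j\<in>UNIV. (x0$j)^2) + 2*(zo*(\<Sum>j\<in>UNIV. w$j) + (zd-zo)*w$i) + (\<Sum>j\<in>UNIV. (w$j)^2)) + gam*\<sigma>^2/2*(zs+u)^2
     + k * (zs + u) * ((real CARD('n)*zo + (zd - zo)) + (\<Sum>j\<in>UNIV. w$j)) - (zd + w$i)/c"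
    unfolding Gr_def e1 e2 e3 k_def su by simp
  also have "\<dots> = ((zd)^2/(2*c) + gam*nu^2/2 * (\<Sum>j\<in>UNIV. (x0$j)^2) + gam*\<sigma>^2/2*zs^2 + k * zs * (real CARD('n)*zo + (zd - zo)) - zd/c)
     + ((w$i)^2/(2*c) + gam*nu^2/2 * (\<Sum>j\<in>UNIV. (w$j)^2) + gam*\<sigma>^2/2*u^2 + k * u * (\<Sum>j\<in>UNIV. w$j))
     + w$i * (zd/c + gam*nu^2*(zd-zo) - 1/c) + (\<Sum>j\<in>UNIV. w$j) * (gam*nu^2*zo + k*zs) + u * (gam*\<sigma>^2*zs + k*(real CARD('n)*zo + (zd - zo)))"
    by (rule alg_row[OF c])
  also have "\<dots> = Gr \<sigma> c gam nu rho i x0 zs + Qr \<sigma> c gam nu rho i w u"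
  proof -
    have "(\<Sum>j\<in>UNIV. x0$j) = real CARD('n)*zo + (zd - zo)"
    proof -
      have "(\<Sum>j\<in>UNIV. x0$j) = (\<Sum>j\<in>UNIV. x0$j * 1)" by simp
      also have "\<dots> = real CARD('n)*zo + (zd - zo)" unfolding x0j sum_if_mult by simp
      finally show ?thesis .
    qed
    moreover have "x0$i = zd" unfolding x0_def by simp
    ultimately show ?thesis unfolding Gr_def Qr_def k_def using F1 F2 F3 by simp
  qed
  finally show ?thesis unfolding x0_def w_def u_def .
qed



lemma Qr_lower:
  fixes w :: "real^'n::finite"
  assumes "gam > 0" "\<sigma> > 0" "nu > 0" "c > 0" "\<bar>rho\<bar> < 1"
  shows "Qr \<sigma> c gam nu rho i w u \<ge> (1-\<bar>rho\<bar>)*gam/2*(nu^2*(\<Sum>j\<in>UNIV. (w$j)^2) + \<sigma>^2*u^2)"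
proof -
  define N where "N = real CARD('n)"
  define S1 where "S1 = (\<Sum>j\<in>UNIV. w$j)"
  define S2 where "S2 = (\<Sum>j\<in>UNIV. (w$j)^2)"
  define k where "k = gam*\<sigma>*rho*nu/sqrt N"
  have N: "N > 0" unfolding N_def by simp
  have S2: "S2 \<ge> 0" unfolding S2_def by (simp add: sum_nonneg)
  have CS: "S1^2 \<le> N * S2"
    using Cauchy_Schwarz_ineq_sum[of "\<lambda>_. 1" "\<lambda>j. w$j" UNIV] unfolding S1_def S2_def N_def by simp
  define T where "T = k * u * S1"
  define R where "R = \<bar>rho\<bar>*gam/2*(nu^2*S2 + \<sigma>^2*u^2)"
  have R: "R \<ge> 0" unfolding R_def using assms S2 by simp
  have kN: "k^2 * N = gam^2*\<sigma>^2*rho^2*nu^2" unfolding k_def using N by (simp add: power_mult_distrib power_divide)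
  have "T^2 = k^2 * u^2 * S1^2" unfolding T_def by (simp add: power_mult_distrib)
  also have "\<dots> \<le> k^2 * u^2 * (N*S2)" using CS by (intro mult_left_mono) auto
  also have "\<dots> = gam^2*\<sigma>^2*rho^2*nu^2 * u^2 * S2" using kN by (simp add: algebra_simps)
  also have "\<dots> \<le> R^2"
  proof -
    have "4*(nu^2*S2)*(\<sigma>^2*u^2) \<le> (nu^2*S2 + \<sigma>^2*u^2)^2"
      using sum_squares_ge_zero[of "nu^2*S2 - \<sigma>^2*u^2" 0] by (simp add: power2_eq_square algebra_simps)
    then have "(rho^2*gam^2/4) * (4*(nu^2*S2)*(\<sigma>^2*u^2)) \<le> (rho^2*gam^2/4) * (nu^2*S2 + \<sigma>^2*u^2)^2"
      by (intro mult_left_mono) auto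
    moreover have "R^2 = (rho^2*gam^2/4) * (nu^2*S2 + \<sigma>^2*u^2)^2"
    proof -
      have "R = (\<bar>rho\<bar>*gam/2) * (nu^2*S2 + \<sigma>^2*u^2)" unfolding R_def by simp
      then have "R^2 = (\<bar>rho\<bar>*gam/2)^2 * (nu^2*S2 + \<sigma>^2*u^2)^2" by (metis power_mult_distrib)
      also have "(\<bar>rho\<bar>*gam/2)^2 = rho^2*gam^2/4" by (simp add: power_mult_distrib power_divide power2_abs)
      finally show ?thesis .
    qed
    moreover have "gam^2*\<sigma>^2*rho^2*nu^2 * u^2 * S2 = (rho^2*gam^2/4) * (4*(nu^2*S2)*(\<sigma>^2*u^2))"
      by simp
    ultimately show ?thesis by linarith
  qed
  finally have "\<bar>T\<bar> \<le> \<bar>R\<bar>" using abs_le_square_iff by blast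
  then have TR: "T \<ge> -R" using R by linarith
  have "Qr \<sigma> c gam nu rho i w u = (w$i)^2/(2*c) + gam/2*(nu^2*S2 + \<sigma>^2*u^2) + T"
    unfolding Qr_def T_def k_def S1_def S2_def N_def by (simp add: algebra_simps)
  moreover have "(w$i)^2/(2*c) \<ge> 0" using assms by simp
  moreover have "(1-\<bar>rho\<bar>)*gam/2*(nu^2*S2 + \<sigma>^2*u^2) = gam/2*(nu^2*S2 + \<sigma>^2*u^2) - R"
    unfolding R_def by (simp add: field_simps)
  ultimately show ?thesis using TR unfolding S2_def[symmetric] by linarith
qed

lemma Qr_comp:
  fixes w :: "real^'n::finite"
  assumes "gam > 0" "\<sigma> > 0" "nu > 0" "c > 0" "\<bar>rho\<bar> < 1"
  shows "(1-\<bar>rho\<bar>)*gam/2*min (nu^2) (\<sigma>^2) * (w$j)^2 \<le> Qr \<sigma> c gam nu rho i w u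
       \<and> (1-\<bar>rho\<bar>)*gam/2*min (nu^2) (\<sigma>^2) * u^2 \<le> Qr \<sigma> c gam nu rho i w u"
proof -
  define S2 where "S2 = (\<Sum>j\<in>UNIV. (w$j)^2)"
  define e where "e = (1-\<bar>rho\<bar>)*gam/2"
  have e: "e > 0" unfolding e_def using assms by simp
  have wj: "(w$j)^2 \<le> S2" unfolding S2_def by (rule member_le_sum) auto
  have Q: "e*(nu^2*S2 + \<sigma>^2*u^2) \<le> Qr \<sigma> c gam nu rho i w u"
    using Qr_lower[OF assms, where i=i and w=w and u=u] unfolding e_def S2_def by simp
  have "min (nu^2) (\<sigma>^2) * (w$j)^2 \<le> nu^2 * S2" using wj
    by (meson min.cobounded1 mult_mono zero_le_power2 order_trans)
  moreover have "min (nu^2) (\<sigma>^2) * u^2 \<le> \<sigma>^2 * u^2"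
    by (simp add: mult_right_mono)
  moreover have "nu^2*S2 \<ge> 0" "\<sigma>^2*u^2 \<ge> 0" using S2_def by (simp_all add: sum_nonneg)
  ultimately have "min (nu^2) (\<sigma>^2) * (w$j)^2 \<le> nu^2*S2 + \<sigma>^2*u^2"
        "min (nu^2) (\<sigma>^2) * u^2 \<le> nu^2*S2 + \<sigma>^2*u^2" by linarith+
  then have "e*(min (nu^2) (\<sigma>^2) * (w$j)^2) \<le> e*(nu^2*S2 + \<sigma>^2*u^2)"
        "e*(min (nu^2) (\<sigma>^2) * u^2) \<le> e*(nu^2*S2 + \<sigma>^2*u^2)"
    using e by (simp_all add: mult_left_mono)
  then show ?thesis using Q unfolding e_def by (simp add: mult.assoc)
qed



lemma FOCs: assumes "n \<ge> 1" "c > 0" "gam > 0" "nu > 0" "rho^2 < 1" "\<sigma> > 0"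
  shows "gam*nu^2*z0o n c gam nu rho + gam*\<sigma>*rho*nu/sqrt n * z0s n \<sigma> c gam nu rho = 0"
    "z0d n c gam nu rho/c + gam*nu^2*(z0d n c gam nu rho - z0o n c gam nu rho) - 1/c = 0"
    "gam*\<sigma>^2*z0s n \<sigma> c gam nu rho + gam*\<sigma>*rho*nu/sqrt n * (n*z0o n c gam nu rho + (z0d n c gam nu rho - z0o n c gam nu rho)) = 0"
proof -
  define D where "D = Dn n c gam nu rho"
  have D: "D > 0" unfolding D_def using Dn_pos assms by blast
  have sn: "sqrt n > 0" using assms by simp
  have sq: "sqrt n * sqrt n = n" using assms by simp
  note cf = z0o_cf[OF assms(1-5)] z0d_cf[OF assms(1-5)] z0s_cf[OF assms]
  show "gam*nu^2*z0o n c gam nu rho + gam*\<sigma>*rho*nu/sqrt n * z0s n \<sigma> c gam nu rho = 0"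
    unfolding cf D_def[symmetric] using D sn assms by (simp add: field_simps power2_eq_square)
  show "z0d n c gam nu rho/c + gam*nu^2*(z0d n c gam nu rho - z0o n c gam nu rho) - 1/c = 0"
  proof -
    define m where "m = n*(1-rho^2) + rho^2"
    have Dm: "m + gam*c*nu^2*(m - rho^2) - D = 0" unfolding D_def Dn_def m_def by (simp add: algebra_simps)
    have "(m/D)/c + gam*nu^2*(m/D - rho^2/D) - 1/c = (m + gam*c*nu^2*(m - rho^2) - D)/(c*D)"
      using D assms by (simp add: field_simps)
    then show ?thesis unfolding cf D_def[symmetric] m_def[symmetric] using Dm by simp
  qed
  show "gam*\<sigma>^2*z0s n \<sigma> c gam nu rho + gam*\<sigma>*rho*nu/sqrt n * (n*z0o n c gam nu rho + (z0d n c gam nu rho - z0o n c gam nu rho)) = 0"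
  proof -
    have e: "n*(rho^2/D) + ((n*(1-rho^2)+rho^2)/D - rho^2/D) = n/D" using D by (simp add: field_simps)
    show ?thesis unfolding cf D_def[symmetric] e using D sn sq assms by (simp add: field_simps power2_eq_square)
  qed
qed



lemma lim_sq: assumes "\<forall>x>0. (g x - L)^2 \<le> C * (x::real)"
  shows "(g \<longlongrightarrow> (L::real)) (at_right 0)"
proof -
  have "((\<lambda>x. g x - L) \<longlongrightarrow> 0) (at_right 0)"
  proof (rule Lim_null_comparison)
    show "eventually (\<lambda>x. norm (g x - L) \<le> sqrt (C*x)) (at_right 0)"
      using eventually_at_right_less[of "0::real"]
    proof (rule eventually_mono)
      fix x :: real assume "0 < x"
      then have "(g x - L)^2 \<le> C*x" using assms by blast
      then have "sqrt ((g x - L)^2) \<le> sqrt (C*x)" by (rule real_sqrt_le_mono)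
      then show "norm (g x - L) \<le> sqrt (C*x)" by simp
    qed
    have "((\<lambda>x. sqrt (C*x)) \<longlongrightarrow> sqrt (C*0)) (at_right (0::real))"
      by (intro tendsto_intros)
    then show "((\<lambda>x. sqrt (C*x)) \<longlongrightarrow> 0) (at_right (0::real))" by simp
  qed
  then show ?thesis by (rule LIM_zero_cancel)
qed

definition Z0Q :: "real \<Rightarrow> real \<Rightarrow> real \<Rightarrow> real \<Rightarrow> real^'n::finite^'n" where
  "Z0Q c gam nu rho = (\<chi> i j. if i = j then z0d (real CARD('n)) c gam nu rho else z0o (real CARD('n)) c gam nu rho)"

definition Z0S :: "real \<Rightarrow> real \<Rightarrow> real \<Rightarrow> real \<Rightarrow> real \<Rightarrow> real^'n::finite" where
  "Z0S \<sigma> c gam nu rho = (\<chi> i. z0s (real CARD('n)) \<sigma> c gam nu rho)"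

lemma decomp:
  fixes zQ :: "real^'n::finite^'n" and zS :: "real^'n"
  assumes "\<sigma> > 0" "c > 0" "gam > 0" "nu > 0" "rho^2 < 1"
  shows "fobj \<sigma> 0 (\<lambda>_::'n. c) (\<lambda>_. gam) (\<lambda>_. nu) (\<lambda>_. rho) zQ zS
    = fobj \<sigma> 0 (\<lambda>_::'n. c) (\<lambda>_. gam) (\<lambda>_. nu) (\<lambda>_. rho) (Z0Q c gam nu rho) (Z0S \<sigma> c gam nu rho)
      - (1/real CARD('n)) * (\<Sum>i\<in>UNIV. Qr \<sigma> c gam nu rho i (zQ$i - Z0Q c gam nu rho $ i) (zS$i - z0s (real CARD('n)) \<sigma> c gam nu rho))"
proof -
  define N where "N = real CARD('n)"
  have N: "N \<ge> 1" unfolding N_def by simp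
  note F = FOCs[OF N assms(2,3,4,5,1)]
  have row: "\<And>i. Gr \<sigma> c gam nu rho i (zQ$i) (zS$i) = Gr \<sigma> c gam nu rho i (Z0Q c gam nu rho $ i) (Z0S \<sigma> c gam nu rho $ i)
      + Qr \<sigma> c gam nu rho i (zQ$i - Z0Q c gam nu rho $ i) (zS$i - z0s N \<sigma> c gam nu rho)"
  proof -
    fix i :: 'n
    have c0: "c \<noteq> 0" using assms by simp
    have "Z0Q c gam nu rho $ i = (\<chi> j. if i = j then z0d N c gam nu rho else z0o N c gam nu rho)"
      unfolding Z0Q_def N_def by simp
    moreover have "Z0S \<sigma> c gam nu rho $ i = z0s N \<sigma> c gam nu rho" unfolding Z0S_def N_def by simp
    ultimately show "?thesis i"
      using row_decomp[OF c0 F[unfolded N_def], where x="zQ$i" and s="zS$i" and i=i] unfolding N_def by simp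
  qed
  show ?thesis unfolding fobj0 row sum.distrib N_def[symmetric] by (simp add: algebra_simps)
qed

lemma Qr_nonneg:
  fixes w :: "real^'n::finite"
  assumes "gam > 0" "\<sigma> > 0" "nu > 0" "c > 0" "\<bar>rho\<bar> < 1"
  shows "Qr \<sigma> c gam nu rho i w u \<ge> 0"
proof -
  have "(1-\<bar>rho\<bar>)*gam/2*(nu^2*(\<Sum>j\<in>UNIV. (w$j)^2) + \<sigma>^2*u^2) \<ge> 0"
    using assms by (intro mult_nonneg_nonneg add_nonneg_nonneg sum_nonneg) auto
  then show ?thesis using Qr_lower[OF assms, where i=i and w=w and u=u] by linarith
qed

lemma dev:
  fixes zQ :: "real^'n::finite^'n" and zS :: "real^'n"
  assumes "\<sigma> > 0" "c > 0" "gam > 0" "nu > 0" "\<bar>rho\<bar> < 1"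
  defines "e \<equiv> (1-\<bar>rho\<bar>)*gam/2*min (nu^2) (\<sigma>^2)"
  defines "G \<equiv> real CARD('n) * (fobj \<sigma> 0 (\<lambda>_::'n. c) (\<lambda>_. gam) (\<lambda>_. nu) (\<lambda>_. rho) (Z0Q c gam nu rho) (Z0S \<sigma> c gam nu rho)
       - fobj \<sigma> 0 (\<lambda>_::'n. c) (\<lambda>_. gam) (\<lambda>_. nu) (\<lambda>_. rho) zQ zS)"
  shows "e * (zQ$i$j - Z0Q c gam nu rho $ i $ j)^2 \<le> G"
    "e * (zS$i - Z0S \<sigma> c gam nu rho $ i)^2 \<le> G"
    "G \<ge> 0"
proof -
  have r2: "rho^2 < 1" using assms(5) sq_less[of rho 1] by simp
  define Q where "Q = (\<lambda>i. Qr \<sigma> c gam nu rho i (zQ$i - Z0Q c gam nu rho $ i) (zS$i - z0s (real CARD('n)) \<sigma> c gam nu rho))"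
  have GQ: "G = (\<Sum>i\<in>UNIV. Q i)" unfolding G_def decomp[OF assms(1-4) r2, of zQ zS] Q_def by simp
  have Qn: "\<And>i. Q i \<ge> 0" unfolding Q_def using Qr_nonneg assms by blast
  have Qi: "Q i \<le> G" unfolding GQ by (rule member_le_sum) (use Qn in auto)
  note C = Qr_comp[OF assms(3,1,4,2,5), where i=i and w="zQ$i - Z0Q c gam nu rho $ i" and j=j
        and u="zS$i - z0s (real CARD('n)) \<sigma> c gam nu rho"]
  show "e * (zQ$i$j - Z0Q c gam nu rho $ i $ j)^2 \<le> G" using C Qi unfolding e_def Q_def by simp
  show "e * (zS$i - Z0S \<sigma> c gam nu rho $ i)^2 \<le> G" using C Qi unfolding e_def Q_def Z0S_def by simp
  show "G \<ge> 0" unfolding GQ using Qn by (simp add: sum_nonneg)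
qed



theorem mainTheorem4:
  fixes \<sigma> c \<gamma> \<nu> \<rho> :: real
  assumes "\<sigma> > 0" and "c > 0" and "\<gamma> > 0" and "\<nu> > 0" and "-1 < \<rho>" and "\<rho> < 1"
  shows
  "(\<exists>!p. is_maximiser (fobj \<sigma> 0 (\<lambda>_::'n::finite. c) (\<lambda>_. \<gamma>) (\<lambda>_. \<nu>) (\<lambda>_. \<rho>)) (fst p) (snd p))
   \<and> is_maximiser (fobj \<sigma> 0 (\<lambda>_::'n. c) (\<lambda>_. \<gamma>) (\<lambda>_. \<nu>) (\<lambda>_. \<rho>))
       (\<chi> i j. if i = j then z0d (real CARD('n)) c \<gamma> \<nu> \<rho> else z0o (real CARD('n)) c \<gamma> \<nu> \<rho>)
       (\<chi> i. z0s (real CARD('n)) \<sigma> c \<gamma> \<nu> \<rho>)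
   \<and> (\<forall>Z :: real \<Rightarrow> (real^'n^'n) \<times> (real^'n).
        (\<forall>\<gamma>P > 0. is_maximiser (fobj \<sigma> \<gamma>P (\<lambda>_::'n. c) (\<lambda>_. \<gamma>) (\<lambda>_. \<nu>) (\<lambda>_. \<rho>))
                     (fst (Z \<gamma>P)) (snd (Z \<gamma>P))) \<longrightarrow>
        (\<forall>i. ((\<lambda>\<gamma>P. snd (Z \<gamma>P) $ i) \<longlongrightarrow> z0s (real CARD('n)) \<sigma> c \<gamma> \<nu> \<rho>) (at_right 0))
      \<and> (\<forall>i. ((\<lambda>\<gamma>P. fst (Z \<gamma>P) $ i $ i) \<longlongrightarrow> z0d (real CARD('n)) c \<gamma> \<nu> \<rho>) (at_right 0))
      \<and> (\<forall>i j. i \<noteq> j \<longrightarrow>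
           ((\<lambda>\<gamma>P. fst (Z \<gamma>P) $ i $ j) \<longlongrightarrow> z0o (real CARD('n)) c \<gamma> \<nu> \<rho>) (at_right 0)))
   \<and> 0 \<le> eta (real CARD('n)) \<gamma> c \<nu> \<rho> \<and> eta (real CARD('n)) \<gamma> c \<nu> \<rho> < real CARD('n)
   \<comment> \<open>|z0s| increasing in |rho|, decreasing in c, unimodal in nu\<close>
   \<and> (\<forall>r1 r2. \<bar>r1\<bar> < \<bar>r2\<bar> \<and> \<bar>r2\<bar> < 1 \<longrightarrow>
        \<bar>z0s (real CARD('n)) \<sigma> c \<gamma> \<nu> r1\<bar> < \<bar>z0s (real CARD('n)) \<sigma> c \<gamma> \<nu> r2\<bar>)
   \<and> (\<forall>c1 c2. 0 < c1 \<and> c1 < c2 \<longrightarrow>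
        \<bar>z0s (real CARD('n)) \<sigma> c2 \<gamma> \<nu> \<rho>\<bar> \<le> \<bar>z0s (real CARD('n)) \<sigma> c1 \<gamma> \<nu> \<rho>\<bar>
        \<and> (\<rho> \<noteq> 0 \<longrightarrow> \<bar>z0s (real CARD('n)) \<sigma> c2 \<gamma> \<nu> \<rho>\<bar> < \<bar>z0s (real CARD('n)) \<sigma> c1 \<gamma> \<nu> \<rho>\<bar>))
   \<and> (\<forall>v1 v2. 0 < v1 \<and> v1 < v2 \<and> v2 \<le> nu_dagger (real CARD('n)) c \<gamma> \<rho> \<longrightarrow>
        \<bar>z0s (real CARD('n)) \<sigma> c \<gamma> v1 \<rho>\<bar> \<le> \<bar>z0s (real CARD('n)) \<sigma> c \<gamma> v2 \<rho>\<bar>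
        \<and> (\<rho> \<noteq> 0 \<longrightarrow> \<bar>z0s (real CARD('n)) \<sigma> c \<gamma> v1 \<rho>\<bar> < \<bar>z0s (real CARD('n)) \<sigma> c \<gamma> v2 \<rho>\<bar>))
   \<and> (\<forall>v1 v2. nu_dagger (real CARD('n)) c \<gamma> \<rho> \<le> v1 \<and> v1 < v2 \<longrightarrow>
        \<bar>z0s (real CARD('n)) \<sigma> c \<gamma> v2 \<rho>\<bar> \<le> \<bar>z0s (real CARD('n)) \<sigma> c \<gamma> v1 \<rho>\<bar>
        \<and> (\<rho> \<noteq> 0 \<longrightarrow> \<bar>z0s (real CARD('n)) \<sigma> c \<gamma> v2 \<rho>\<bar> < \<bar>z0s (real CARD('n)) \<sigma> c \<gamma> v1 \<rho>\<bar>))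
   \<comment> \<open>z0o (n >= 2): increasing in |rho|, decreasing in c and nu\<close>
   \<and> (CARD('n) \<ge> 2 \<longrightarrow>
        (\<forall>r1 r2. \<bar>r1\<bar> < \<bar>r2\<bar> \<and> \<bar>r2\<bar> < 1 \<longrightarrow>
           z0o (real CARD('n)) c \<gamma> \<nu> r1 < z0o (real CARD('n)) c \<gamma> \<nu> r2)
      \<and> (\<forall>c1 c2. 0 < c1 \<and> c1 < c2 \<longrightarrow>
           z0o (real CARD('n)) c2 \<gamma> \<nu> \<rho> \<le> z0o (real CARD('n)) c1 \<gamma> \<nu> \<rho>
           \<and> (\<rho> \<noteq> 0 \<longrightarrow> z0o (real CARD('n)) c2 \<gamma> \<nu> \<rho> < z0o (real CARD('n)) c1 \<gamma> \<nu> \<rho>))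
      \<and> (\<forall>v1 v2. 0 < v1 \<and> v1 < v2 \<longrightarrow>
           z0o (real CARD('n)) c \<gamma> v2 \<rho> \<le> z0o (real CARD('n)) c \<gamma> v1 \<rho>
           \<and> (\<rho> \<noteq> 0 \<longrightarrow> z0o (real CARD('n)) c \<gamma> v2 \<rho> < z0o (real CARD('n)) c \<gamma> v1 \<rho>)))
   \<comment> \<open>z0d: increasing in |rho|, decreasing in c and nu\<close>
   \<and> (\<forall>r1 r2. \<bar>r1\<bar> < \<bar>r2\<bar> \<and> \<bar>r2\<bar> < 1 \<longrightarrow>
        z0d (real CARD('n)) c \<gamma> \<nu> r1 < z0d (real CARD('n)) c \<gamma> \<nu> r2)
   \<and> (\<forall>c1 c2. 0 < c1 \<and> c1 < c2 \<longrightarrow>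
        z0d (real CARD('n)) c2 \<gamma> \<nu> \<rho> < z0d (real CARD('n)) c1 \<gamma> \<nu> \<rho>)
   \<and> (\<forall>v1 v2. 0 < v1 \<and> v1 < v2 \<longrightarrow>
        z0d (real CARD('n)) c \<gamma> v2 \<rho> < z0d (real CARD('n)) c \<gamma> v1 \<rho>)"
proof -
  define N where "N = real CARD('n)"
  have N1: "N \<ge> 1" unfolding N_def by simp
  have Npos: "N > 0" using N1 by simp
  have ar: "\<bar>\<rho>\<bar> < 1" using assms by simp
  have r2: "\<rho>^2 < 1" using sq_less[of \<rho> 1] ar by simp
  define f0 where "f0 = fobj \<sigma> 0 (\<lambda>_::'n. c) (\<lambda>_. \<gamma>) (\<lambda>_. \<nu>) (\<lambda>_. \<rho>)"
  define e where "e = (1-\<bar>\<rho>\<bar>)*\<gamma>/2*min (\<nu>^2) (\<sigma>^2)"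
  have e: "e > 0" unfolding e_def using assms ar by simp
  have eQ: "(\<chi> i j. if i = j then z0d (real CARD('n)) c \<gamma> \<nu> \<rho> else z0o (real CARD('n)) c \<gamma> \<nu> \<rho>) = (Z0Q c \<gamma> \<nu> \<rho> :: real^'n^'n)"
    unfolding Z0Q_def by simp
  have eS: "(\<chi> i. z0s (real CARD('n)) \<sigma> c \<gamma> \<nu> \<rho>) = (Z0S \<sigma> c \<gamma> \<nu> \<rho> :: real^'n)"
    unfolding Z0S_def by simp
  note dv = dev[OF assms(1,2,3,4) ar]
  have maxi: "is_maximiser f0 (Z0Q c \<gamma> \<nu> \<rho>) (Z0S \<sigma> c \<gamma> \<nu> \<rho>)"
    unfolding is_maximiser_def
  proof (intro allI)
    fix wQ :: "real^'n^'n" and wS :: "real^'n"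
    have "0 \<le> real CARD('n) * (f0 (Z0Q c \<gamma> \<nu> \<rho>) (Z0S \<sigma> c \<gamma> \<nu> \<rho>) - f0 wQ wS)"
      using dv(3)[where zQ=wQ and zS=wS] unfolding f0_def .
    then show "f0 wQ wS \<le> f0 (Z0Q c \<gamma> \<nu> \<rho>) (Z0S \<sigma> c \<gamma> \<nu> \<rho>)"
      by (simp add: zero_le_mult_iff)
  qed
  have uniq: "p = (Z0Q c \<gamma> \<nu> \<rho>, Z0S \<sigma> c \<gamma> \<nu> \<rho>)" if hp: "is_maximiser f0 (fst p) (snd p)" for p
  proof -
    define G where "G = real CARD('n) * (f0 (Z0Q c \<gamma> \<nu> \<rho>) (Z0S \<sigma> c \<gamma> \<nu> \<rho>) - f0 (fst p) (snd p))"
    have "f0 (Z0Q c \<gamma> \<nu> \<rho>) (Z0S \<sigma> c \<gamma> \<nu> \<rho>) \<le> f0 (fst p) (snd p)"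
      using hp unfolding is_maximiser_def by blast
    then have G0: "G \<le> 0" unfolding G_def by (simp add: mult_nonneg_nonpos)
    have q: "fst p $ i $ j = Z0Q c \<gamma> \<nu> \<rho> $ i $ j" for i j
    proof -
      have "e * (fst p $ i $ j - Z0Q c \<gamma> \<nu> \<rho> $ i $ j)^2 \<le> 0"
        using dv(1)[where zQ="fst p" and zS="snd p" and i=i and j=j] G0 unfolding G_def f0_def e_def by linarith
      then have "(fst p $ i $ j - Z0Q c \<gamma> \<nu> \<rho> $ i $ j)^2 \<le> 0" using e by (simp add: mult_le_0_iff)
      then show ?thesis by simp
    qed
    have s: "snd p $ i = Z0S \<sigma> c \<gamma> \<nu> \<rho> $ i" for i
    proof -
      have "e * (snd p $ i - Z0S \<sigma> c \<gamma> \<nu> \<rho> $ i)^2 \<le> 0"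
        using dv(2)[where zQ="fst p" and zS="snd p" and i=i] G0 unfolding G_def f0_def e_def by linarith
      then have "(snd p $ i - Z0S \<sigma> c \<gamma> \<nu> \<rho> $ i)^2 \<le> 0" using e by (simp add: mult_le_0_iff)
      then show ?thesis by simp
    qed
    have "fst p = Z0Q c \<gamma> \<nu> \<rho>" using q by (simp add: vec_eq_iff)
    moreover have "snd p = Z0S \<sigma> c \<gamma> \<nu> \<rho>" using s by (simp add: vec_eq_iff)
    ultimately show ?thesis by (simp add: prod_eq_iff)
  qed
  have P1: "\<exists>!p. is_maximiser f0 (fst p) (snd p)"
  proof (rule ex1I[of _ "(Z0Q c \<gamma> \<nu> \<rho>, Z0S \<sigma> c \<gamma> \<nu> \<rho>)"])
    show "is_maximiser f0 (fst (Z0Q c \<gamma> \<nu> \<rho>, Z0S \<sigma> c \<gamma> \<nu> \<rho>)) (snd (Z0Q c \<gamma> \<nu> \<rho>, Z0S \<sigma> c \<gamma> \<nu> \<rho>))"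
      using maxi by simp
  qed (use uniq in blast)
  have P3: "(\<forall>i. ((\<lambda>\<gamma>P. snd (Z \<gamma>P) $ i) \<longlongrightarrow> z0s (real CARD('n)) \<sigma> c \<gamma> \<nu> \<rho>) (at_right 0))
      \<and> (\<forall>i. ((\<lambda>\<gamma>P. fst (Z \<gamma>P) $ i $ i) \<longlongrightarrow> z0d (real CARD('n)) c \<gamma> \<nu> \<rho>) (at_right 0))
      \<and> (\<forall>i j. i \<noteq> j \<longrightarrow>
           ((\<lambda>\<gamma>P. fst (Z \<gamma>P) $ i $ j) \<longlongrightarrow> z0o (real CARD('n)) c \<gamma> \<nu> \<rho>) (at_right 0))"
    if hZ: "\<forall>\<gamma>P > 0. is_maximiser (fobj \<sigma> \<gamma>P (\<lambda>_::'n. c) (\<lambda>_. \<gamma>) (\<lambda>_. \<nu>) (\<lambda>_. \<rho>))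
                     (fst (Z \<gamma>P)) (snd (Z \<gamma>P))" for Z :: "real \<Rightarrow> (real^'n^'n) \<times> (real^'n)"
  proof -
    define P0 where "P0 = pen \<sigma> \<nu> \<rho> (Z0Q c \<gamma> \<nu> \<rho> :: real^'n^'n) (Z0S \<sigma> c \<gamma> \<nu> \<rho>)"
    define K where "K = N * P0 / e"
    have Gb: "real CARD('n) * (f0 (Z0Q c \<gamma> \<nu> \<rho>) (Z0S \<sigma> c \<gamma> \<nu> \<rho>) - f0 (fst (Z x)) (snd (Z x))) \<le> N * P0 * x"
      if x: "x > 0" for x
    proof -
      have "fobj \<sigma> x (\<lambda>_::'n. c) (\<lambda>_. \<gamma>) (\<lambda>_. \<nu>) (\<lambda>_. \<rho>) (Z0Q c \<gamma> \<nu> \<rho>) (Z0S \<sigma> c \<gamma> \<nu> \<rho>)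
          \<le> fobj \<sigma> x (\<lambda>_::'n. c) (\<lambda>_. \<gamma>) (\<lambda>_. \<nu>) (\<lambda>_. \<rho>) (fst (Z x)) (snd (Z x))"
        using hZ x unfolding is_maximiser_def by blast
      then have "f0 (Z0Q c \<gamma> \<nu> \<rho>) (Z0S \<sigma> c \<gamma> \<nu> \<rho>) - x * P0 \<le> f0 (fst (Z x)) (snd (Z x)) - x * pen \<sigma> \<nu> \<rho> (fst (Z x)) (snd (Z x))"
        unfolding fobj_pen[of \<sigma> x] f0_def P0_def .
      moreover have "x * pen \<sigma> \<nu> \<rho> (fst (Z x)) (snd (Z x)) \<ge> 0" using pen_nonneg[of \<rho> \<sigma> \<nu> "fst (Z x)" "snd (Z x)"] r2 x by simp
      ultimately have "f0 (Z0Q c \<gamma> \<nu> \<rho>) (Z0S \<sigma> c \<gamma> \<nu> \<rho>) - f0 (fst (Z x)) (snd (Z x)) \<le> x * P0" by linarith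
      then show ?thesis unfolding N_def[symmetric] using Npos by (simp add: mult.assoc mult_left_mono mult.commute)
    qed
    have fin: "(g \<longlongrightarrow> L) (at_right 0)" if hg: "\<forall>x>0. e * (g x - L)^2 \<le> N * P0 * x" for g L
    proof (rule lim_sq[where C=K])
      show "\<forall>x>0. (g x - L)^2 \<le> K * x"
      proof (intro allI impI)
        fix x :: real assume "x > 0"
        then have "e * (g x - L)^2 \<le> N * P0 * x" using hg by blast
        then show "(g x - L)^2 \<le> K * x" unfolding K_def using e by (simp add: field_simps)
      qed
    qed
    show ?thesis
    proof (intro conjI allI impI)
      fix i
      show "((\<lambda>\<gamma>P. snd (Z \<gamma>P) $ i) \<longlongrightarrow> z0s (real CARD('n)) \<sigma> c \<gamma> \<nu> \<rho>) (at_right 0)"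
      proof (rule fin, intro allI impI)
        fix x :: real assume x: "x > 0"
        show "e * (snd (Z x) $ i - z0s (real CARD('n)) \<sigma> c \<gamma> \<nu> \<rho>)^2 \<le> N * P0 * x"
          using dv(2)[where zQ="fst (Z x)" and zS="snd (Z x)" and i=i] Gb[OF x] unfolding e_def f0_def Z0S_def by simp
      qed
    next
      fix i
      show "((\<lambda>\<gamma>P. fst (Z \<gamma>P) $ i $ i) \<longlongrightarrow> z0d (real CARD('n)) c \<gamma> \<nu> \<rho>) (at_right 0)"
      proof (rule fin, intro allI impI)
        fix x :: real assume x: "x > 0"
        show "e * (fst (Z x) $ i $ i - z0d (real CARD('n)) c \<gamma> \<nu> \<rho>)^2 \<le> N * P0 * x"
          using dv(1)[where zQ="fst (Z x)" and zS="snd (Z x)" and i=i and j=i] Gb[OF x] unfolding e_def f0_def Z0Q_def by simp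
      qed
    next
      fix i j :: 'n assume ij: "i \<noteq> j"
      show "((\<lambda>\<gamma>P. fst (Z \<gamma>P) $ i $ j) \<longlongrightarrow> z0o (real CARD('n)) c \<gamma> \<nu> \<rho>) (at_right 0)"
      proof (rule fin, intro allI impI)
        fix x :: real assume x: "x > 0"
        show "e * (fst (Z x) $ i $ j - z0o (real CARD('n)) c \<gamma> \<nu> \<rho>)^2 \<le> N * P0 * x"
          using dv(1)[where zQ="fst (Z x)" and zS="snd (Z x)" and i=i and j=j] Gb[OF x] ij unfolding e_def f0_def Z0Q_def by simp
      qed
    qed
  qed
  note N1' = N1[unfolded N_def]
  show ?thesis
    unfolding eQ eS f0_def[symmetric]
  proof (intro conjI)
    show "\<exists>!p. is_maximiser f0 (fst p) (snd p)" by (rule P1)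
    show "is_maximiser f0 (Z0Q c \<gamma> \<nu> \<rho>) (Z0S \<sigma> c \<gamma> \<nu> \<rho>)" by (rule maxi)
    show "\<forall>Z :: real \<Rightarrow> (real^'n^'n) \<times> (real^'n).
        (\<forall>\<gamma>P > 0. is_maximiser (fobj \<sigma> \<gamma>P (\<lambda>_::'n. c) (\<lambda>_. \<gamma>) (\<lambda>_. \<nu>) (\<lambda>_. \<rho>))
                     (fst (Z \<gamma>P)) (snd (Z \<gamma>P))) \<longrightarrow>
        (\<forall>i. ((\<lambda>\<gamma>P. snd (Z \<gamma>P) $ i) \<longlongrightarrow> z0s (real CARD('n)) \<sigma> c \<gamma> \<nu> \<rho>) (at_right 0))
      \<and> (\<forall>i. ((\<lambda>\<gamma>P. fst (Z \<gamma>P) $ i $ i) \<longlongrightarrow> z0d (real CARD('n)) c \<gamma> \<nu> \<rho>) (at_right 0))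
      \<and> (\<forall>i j. i \<noteq> j \<longrightarrow>
           ((\<lambda>\<gamma>P. fst (Z \<gamma>P) $ i $ j) \<longlongrightarrow> z0o (real CARD('n)) c \<gamma> \<nu> \<rho>) (at_right 0))"
      using P3 by blast
    show "0 \<le> eta (real CARD('n)) \<gamma> c \<nu> \<rho>" "eta (real CARD('n)) \<gamma> c \<nu> \<rho> < real CARD('n)"
      using eta_bounds[OF N1' assms(2,3,4) r2] by auto
    show "\<forall>r1 r2. \<bar>r1\<bar> < \<bar>r2\<bar> \<and> \<bar>r2\<bar> < 1 \<longrightarrow>
        \<bar>z0s (real CARD('n)) \<sigma> c \<gamma> \<nu> r1\<bar> < \<bar>z0s (real CARD('n)) \<sigma> c \<gamma> \<nu> r2\<bar>"
      using z0s_rho[OF N1' assms(2,3,4,1)] by blast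
    show "\<forall>c1 c2. 0 < c1 \<and> c1 < c2 \<longrightarrow>
        \<bar>z0s (real CARD('n)) \<sigma> c2 \<gamma> \<nu> \<rho>\<bar> \<le> \<bar>z0s (real CARD('n)) \<sigma> c1 \<gamma> \<nu> \<rho>\<bar>
        \<and> (\<rho> \<noteq> 0 \<longrightarrow> \<bar>z0s (real CARD('n)) \<sigma> c2 \<gamma> \<nu> \<rho>\<bar> < \<bar>z0s (real CARD('n)) \<sigma> c1 \<gamma> \<nu> \<rho>\<bar>)"
      using z0s_c[OF N1' _ _ assms(3,4,1) r2] by blast
    show "\<forall>v1 v2. 0 < v1 \<and> v1 < v2 \<and> v2 \<le> nu_dagger (real CARD('n)) c \<gamma> \<rho> \<longrightarrow>
        \<bar>z0s (real CARD('n)) \<sigma> c \<gamma> v1 \<rho>\<bar> \<le> \<bar>z0s (real CARD('n)) \<sigma> c \<gamma> v2 \<rho>\<bar>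
        \<and> (\<rho> \<noteq> 0 \<longrightarrow> \<bar>z0s (real CARD('n)) \<sigma> c \<gamma> v1 \<rho>\<bar> < \<bar>z0s (real CARD('n)) \<sigma> c \<gamma> v2 \<rho>\<bar>)"
      using z0s_nu_up[OF N1' assms(2,3,1) r2] by blast
    show "\<forall>v1 v2. nu_dagger (real CARD('n)) c \<gamma> \<rho> \<le> v1 \<and> v1 < v2 \<longrightarrow>
        \<bar>z0s (real CARD('n)) \<sigma> c \<gamma> v2 \<rho>\<bar> \<le> \<bar>z0s (real CARD('n)) \<sigma> c \<gamma> v1 \<rho>\<bar>
        \<and> (\<rho> \<noteq> 0 \<longrightarrow> \<bar>z0s (real CARD('n)) \<sigma> c \<gamma> v2 \<rho>\<bar> < \<bar>z0s (real CARD('n)) \<sigma> c \<gamma> v1 \<rho>\<bar>)"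
      using z0s_nu_down[OF N1' assms(2,3,1) r2] by blast
    show "CARD('n) \<ge> 2 \<longrightarrow>
        (\<forall>r1 r2. \<bar>r1\<bar> < \<bar>r2\<bar> \<and> \<bar>r2\<bar> < 1 \<longrightarrow>
           z0o (real CARD('n)) c \<gamma> \<nu> r1 < z0o (real CARD('n)) c \<gamma> \<nu> r2)
      \<and> (\<forall>c1 c2. 0 < c1 \<and> c1 < c2 \<longrightarrow>
           z0o (real CARD('n)) c2 \<gamma> \<nu> \<rho> \<le> z0o (real CARD('n)) c1 \<gamma> \<nu> \<rho>
           \<and> (\<rho> \<noteq> 0 \<longrightarrow> z0o (real CARD('n)) c2 \<gamma> \<nu> \<rho> < z0o (real CARD('n)) c1 \<gamma> \<nu> \<rho>))
      \<and> (\<forall>v1 v2. 0 < v1 \<and> v1 < v2 \<longrightarrow>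
           z0o (real CARD('n)) c \<gamma> v2 \<rho> \<le> z0o (real CARD('n)) c \<gamma> v1 \<rho>
           \<and> (\<rho> \<noteq> 0 \<longrightarrow> z0o (real CARD('n)) c \<gamma> v2 \<rho> < z0o (real CARD('n)) c \<gamma> v1 \<rho>))"
      using z0o_rho[OF N1' assms(2,3,4)] z0o_c[OF N1' _ _ assms(3,4) r2] z0o_nu[OF N1' assms(2) _ _ assms(3) r2]
      by blast
    show "\<forall>r1 r2. \<bar>r1\<bar> < \<bar>r2\<bar> \<and> \<bar>r2\<bar> < 1 \<longrightarrow>
        z0d (real CARD('n)) c \<gamma> \<nu> r1 < z0d (real CARD('n)) c \<gamma> \<nu> r2"
      using z0d_rho[OF N1' assms(2,3,4)] by blast
    show "\<forall>c1 c2. 0 < c1 \<and> c1 < c2 \<longrightarrow>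
        z0d (real CARD('n)) c2 \<gamma> \<nu> \<rho> < z0d (real CARD('n)) c1 \<gamma> \<nu> \<rho>"
      using z0d_c[OF N1' _ _ assms(3,4) r2] by blast
    show "\<forall>v1 v2. 0 < v1 \<and> v1 < v2 \<longrightarrow>
        z0d (real CARD('n)) c \<gamma> v2 \<rho> < z0d (real CARD('n)) c \<gamma> v1 \<rho>"
      using z0d_nu[OF N1' assms(2) _ _ assms(3) r2] by blast
  qed
qed

end
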